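(* Let $\mathcal{X}$ be a set and $\mathcal{H}\subseteq\{0,1\}^{\mathcal{X}}$. Player $\mathrm{P_A}$ has a winning strategy in the Gale–Stewart game $\mathfrak{G}$ if and only if $\mathcal{H}$ has an infinite Littlestone tree.
   Context: For $x_1,\ldots,x_t\in\mathcal{X}$ and $y_1,\ldots,y_t\in\{0,1\}$, let $\mathcal{H}_{x_1,y_1,\ldots,x_t,y_t}=\{h\in\mathcal{H}:h(x_s)=y_s,\ s\le t\}$. The game $\mathfrak{G}$ has two players $\mathrm{P_A}$ and $\mathrm{P_L}$; in each round $\tau\ge1$, $\mathrm{P_A}$ chooses $\xi_\tau\in\mathcal{X}$, then $\mathrm{P_L}$ chooses $\eta_\tau\in\{0,1\}$. $\mathrm{P_L}$ wins if $\mathcal{H}_{\xi_1,\eta_1,\ldots,\xi_\tau,\eta_\tau}=\varnothing$ for some finite $\tau$; otherwise $\mathrm{P_A}$ wins. A strategy for a player is a sequence of functions giving that player's move in round $\tau$ as a function of all previous moves (and, for $\mathrm{P_L}$, the current move $\xi_\tau$); it is winning if it wins against every play of the opponent. Littlestone tree of depth $d\le\infty$: a collection $\{x_{\mathbf u}:0\le k<d,\ \mathbf u\in\{0,1\}^k\}\subseteq\mathcal{X}$ such that for every $\mathbf y\in\{0,1\}^d$ and $n<d$ there is $h\in\mathcal{H}$ with $h(x_{\mathbf y_{\le k}})=y_{k+1}$ for $0\le k\le n$, $\mathbf y_{\le k}=(y_1,\ldots,y_k)$. Infinite: $d=\infty$. *)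

theory Defs
  imports Main
begin

text \<open>Hypotheses are functions 'x => bool (label 1 = True, 0 = False).
  A history of the game is a list of pairs (xi_s, eta_s) of moves made so far.\<close>

definition consistent :: "('x \<Rightarrow> bool) set \<Rightarrow> ('x \<times> bool) list \<Rightarrow> ('x \<Rightarrow> bool) set" where
  "consistent H hs = {h \<in> H. \<forall>(x, y) \<in> set hs. h x = y}"

fun play_hist :: "(('x \<times> bool) list \<Rightarrow> 'x) \<Rightarrow> (nat \<Rightarrow> bool) \<Rightarrow> nat \<Rightarrow> ('x \<times> bool) list" where
  "play_hist sA eta 0 = []"
| "play_hist sA eta (Suc n) = play_hist sA eta n @ [(sA (play_hist sA eta n), eta n)]"

definition PA_winning :: "('x \<Rightarrow> bool) set \<Rightarrow> (('x \<times> bool) list \<Rightarrow> 'x) \<Rightarrow> bool" where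
  "PA_winning H sA \<longleftrightarrow> (\<forall>eta n. consistent H (play_hist sA eta n) \<noteq> {})"

text \<open>Infinite Littlestone tree: nodes indexed by finite 0/1 strings u (bool lists).
  A branch y : nat => bool has y_{k+1} = y k, so y_{<=k} = map y [0..<k].\<close>

definition infinite_littlestone_tree :: "('x \<Rightarrow> bool) set \<Rightarrow> (bool list \<Rightarrow> 'x) \<Rightarrow> bool" where
  "infinite_littlestone_tree H t \<longleftrightarrow>
     (\<forall>y :: nat \<Rightarrow> bool. \<forall>n. \<exists>h \<in> H. \<forall>k \<le> n. h (t (map y [0..<k])) = y k)"

end

theory Submission
  imports Defs
begin

lemma ph_cong: "(\<forall>i<n. eta i = eta' i) \<Longrightarrow> play_hist sA eta n = play_hist sA eta' n"
  by (induction n) auto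

lemma ph_in: "k < n \<Longrightarrow> (sA (play_hist sA eta k), eta k) \<in> set (play_hist sA eta n)"
  by (induction n) (auto simp: less_Suc_eq)

lemma ph_mem: "p \<in> set (play_hist sA eta n) \<Longrightarrow> \<exists>k<n. p = (sA (play_hist sA eta k), eta k)"
  by (induction n) (auto simp: less_Suc_eq)

lemma ph_snd: "map snd (play_hist sA eta n) = map eta [0..<n]"
  by (induction n) auto

theorem mainTheorem4:
  fixes H :: "('x \<Rightarrow> bool) set"
  shows "(\<exists>sA. PA_winning H sA) \<longleftrightarrow> (\<exists>t. infinite_littlestone_tree H t)"
proof
  assume "\<exists>sA. PA_winning H sA"
  then obtain sA where W: "PA_winning H sA" by blast
  define t where "t u = sA (play_hist sA (\<lambda>i. u ! i) (length u))" for u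
  have "infinite_littlestone_tree H t"
    unfolding infinite_littlestone_tree_def
  proof (intro allI)
    fix y :: "nat \<Rightarrow> bool" and n
    from W obtain h where h: "h \<in> consistent H (play_hist sA y (Suc n))"
      unfolding PA_winning_def by blast
    have tk: "t (map y [0..<k]) = sA (play_hist sA y k)" for k
      unfolding t_def by (simp, rule arg_cong[where f=sA], rule ph_cong, simp)
    show "\<exists>h\<in>H. \<forall>k\<le>n. h (t (map y [0..<k])) = y k"
    proof (intro bexI allI impI)
      show "h \<in> H" using h by (simp add: consistent_def)
      fix k assume "k \<le> n"
      then have "(sA (play_hist sA y k), y k) \<in> set (play_hist sA y (Suc n))"
        by (intro ph_in) simp
      then show "h (t (map y [0..<k])) = y k" using h tk by (auto simp: consistent_def)
    qed
  qed
  then show "\<exists>t. infinite_littlestone_tree H t" by blast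
next
  assume "\<exists>t. infinite_littlestone_tree H t"
  then obtain t where T: "infinite_littlestone_tree H t" by blast
  define sA where "sA hs = t (map snd hs)" for hs :: "('x \<times> bool) list"
  have "PA_winning H sA"
    unfolding PA_winning_def
  proof (intro allI)
    fix eta :: "nat \<Rightarrow> bool" and n
    from T obtain h where h: "h \<in> H" "\<forall>k\<le>n. h (t (map eta [0..<k])) = eta k"
      unfolding infinite_littlestone_tree_def by blast
    have "\<forall>p\<in>set (play_hist sA eta n). h (fst p) = snd p"
    proof
      fix p assume "p \<in> set (play_hist sA eta n)"
      then obtain k where k: "k < n" "p = (sA (play_hist sA eta k), eta k)"
        using ph_mem by blast
      have "h (t (map eta [0..<k])) = eta k" using h(2) k(1) by simp
      then show "h (fst p) = snd p" using k by (simp add: sA_def ph_snd)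
    qed
    then have "h \<in> consistent H (play_hist sA eta n)"
      using h(1) unfolding consistent_def by auto
    then show "consistent H (play_hist sA eta n) \<noteq> {}" by blast
  qed
  then show "\<exists>sA. PA_winning H sA" by blast
qed

end
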